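(* Let $\alpha\in(0,1]$ and $\lambda\in\mathbb{C}$ with $\operatorname{Re}\lambda>-1$ and $\lambda\notin\{0,1\}$. Then there is no nontrivial $\psi\in C^\infty[0,1]$ solving \[ z(1-z)\psi''(z)+\big(\lambda-\sqrt{1-\alpha}-2\lambda z\big)\psi'(z)-\lambda(\lambda-1)\psi(z)=0 . \] In particular, $U_{\alpha,\infty,\kappa}$ is mode-stable: every $\lambda\in\mathbb{C}$ for which there exists $0\ne\phi\in C^\infty[-1,1]$ with \[ \Big(\lambda^2+\lambda-\frac{2\alpha\lambda}{1+\sqrt{1-\alpha}\,y}\Big)\phi+\Big(2\lambda+2-\frac{2\alpha}{1+\sqrt{1-\alpha}\,y}\Big)y\,\phi'+(y^2-1)\phi''=0 \] satisfies either $\operatorname{Re}\lambda<0$ or $\lambda\in\{0,1\}$.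
   Context: The hypergeometric ODE is obtained from $(y^2-1)\phi''+(2\lambda y+2\sqrt{1-\alpha})\phi'+(\lambda^2-\lambda)\phi=0$ on $[-1,1]$ via $y=2z-1$, $\phi(y)=\psi(z)$. $U_{\alpha,\infty,\kappa}(s,y)=\alpha s-\alpha\ln(1+\sqrt{1-\alpha}y)+\kappa$; its linearised operator's eigenvalues are the $\lambda$ for which the second displayed ODE has a nonzero smooth solution on $[-1,1]$, and mode-stability means each such eigenvalue has negative real part or equals $0$ or $1$. *)

theory Defs
  imports "HOL-Analysis.Analysis"
begin

definition dwithin :: "real set \<Rightarrow> (real \<Rightarrow> complex) \<Rightarrow> real \<Rightarrow> complex" where
  "dwithin S f x = vector_derivative f (at x within S)"

definition C_inf_on :: "real set \<Rightarrow> (real \<Rightarrow> complex) \<Rightarrow> bool" where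
  "C_inf_on S f \<longleftrightarrow> (\<exists>D. D 0 = f \<and>
      (\<forall>n. \<forall>x\<in>S. (D n has_vector_derivative D (Suc n) x) (at x within S)))"

end

theory Submission
  imports Defs
begin


definition rp :: "real \<Rightarrow> complex \<Rightarrow> complex" where
  "rp x a = (complex_of_real x) powr a"

lemma rp_deriv:
  assumes "0 < x"
  shows "((\<lambda>x. rp x a) has_vector_derivative (a * rp x a / of_real x)) (at x within S)"
proof -
  have "((\<lambda>w::complex. w powr a) has_field_derivative (a * (of_real x) powr (a - 1))) (at (of_real x))"
    by (rule has_field_derivative_powr) (use assms in \<open>auto simp: complex_nonpos_Reals_iff\<close>)
  then have "((\<lambda>x. (of_real x::complex) powr a) has_vector_derivative (a * (of_real x) powr (a - 1))) (at x within S)"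
    by (rule has_vector_derivative_real_field)
  moreover have "(of_real x::complex) powr (a - 1) = rp x a / of_real x"
    by (simp add: rp_def powr_diff)
  ultimately show ?thesis by (simp add: rp_def)
qed

lemma rp_cont:
  assumes "0 < Re a"
  shows "continuous_on {0..} (\<lambda>x. rp x a)"
  unfolding rp_def
  by (intro continuous_intros) (use assms in auto)

lemma rp_nz: "0 < x \<Longrightarrow> rp x a \<noteq> 0"
  by (simp add: rp_def)

lemma rp_deriv2:
  assumes "x < 1"
  shows "((\<lambda>x. rp (1 - x) a) has_vector_derivative (- (a * rp (1 - x) a / of_real (1 - x)))) (at x)"
proof -
  have "((\<lambda>x. 1 - x) has_vector_derivative (-1::real)) (at x)"
    by (auto intro!: derivative_eq_intros simp: has_real_derivative_iff_has_vector_derivative[symmetric])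
  moreover have "((\<lambda>x. rp x a) has_vector_derivative (a * rp (1 - x) a / of_real (1 - x))) (at (1 - x))"
    using rp_deriv[of "1 - x" a UNIV] assms by simp
  ultimately have "((\<lambda>x. rp x a) \<circ> (\<lambda>x. 1 - x) has_vector_derivative ((-1) *\<^sub>R (a * rp (1 - x) a / of_real (1 - x)))) (at x)"
    by (rule vector_diff_chain_at)
  then show ?thesis by (simp add: o_def)
qed


lemma core_KL:
  fixes a b c :: complex and f f1 f2 w g g1 g2 :: "real \<Rightarrow> complex"
  assumes cw: "continuous_on {0..1} w"
  and wd: "\<And>z. z \<in> {0<..<1} \<Longrightarrow> (w has_vector_derivative (w z * ((c-1)/of_real z - (a+b-c)/of_real(1-z)))) (at z)"
  and cf: "continuous_on {0..1} f" and cf1: "continuous_on {0..1} f1"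
  and d1: "\<And>z. z \<in> {0<..<1} \<Longrightarrow> (f has_vector_derivative f1 z) (at z)"
  and d2: "\<And>z. z \<in> {0<..<1} \<Longrightarrow> (f1 has_vector_derivative f2 z) (at z)"
  and eq: "\<And>z. z \<in> {0<..<1} \<Longrightarrow> of_real (z*(1-z)) * f2 z + (c - (a+b+1) * of_real z) * f1 z - a*b*f z = 0"
  and gd1: "\<And>z. (g has_vector_derivative g1 z) (at z)"
  and gd2: "\<And>z. (g1 has_vector_derivative g2 z) (at z)"
  shows "((\<lambda>z. w z * f z * (of_real (z*(1-z)) * g2 z + (c-(a+b+1) * of_real z) * g1 z - a*b*g z)) has_integral 0) {0..1}"
proof -
  define H where "H z = of_real (z*(1-z)) * w z * (f z * g1 z - f1 z * g z)" for z
  have cg: "continuous_on {0..1} g"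
    using gd1 continuous_on_vector_derivative has_vector_derivative_at_within by blast
  have cg1: "continuous_on {0..1} g1"
    using gd2 continuous_on_vector_derivative has_vector_derivative_at_within by blast
  have cH: "continuous_on {0..1} H"
    unfolding H_def by (intro continuous_intros cw cf cf1 cg cg1)
  have dH: "(H has_vector_derivative (w z * f z * (of_real (z*(1-z)) * g2 z + (c-(a+b+1) * of_real z) * g1 z - a*b*g z))) (at z)"
    if z: "z \<in> {0<..<1}" for z
  proof -
    have zz: "(of_real z::complex) \<noteq> 0" "(of_real (1-z)::complex) \<noteq> 0" using z by auto
    have dp: "((\<lambda>z. complex_of_real (z*(1-z))) has_vector_derivative of_real (1 - 2*z)) (at z)"
      by (auto intro!: derivative_eq_intros)
    have "(H has_vector_derivative
       ((of_real (z*(1-z)) * w z) * ((f z * g2 z + f1 z * g1 z) - (f1 z * g1 z + f2 z * g z))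
        + (of_real (z*(1-z)) * (w z * ((c-1)/of_real z - (a+b-c)/of_real(1-z))) + of_real (1 - 2*z) * w z)
          * (f z * g1 z - f1 z * g z))) (at z)"
      unfolding H_def
      by (intro has_vector_derivative_mult has_vector_derivative_diff dp wd d1 d2 gd1 gd2 z)
    moreover have "((of_real (z*(1-z)) * w z) * ((f z * g2 z + f1 z * g1 z) - (f1 z * g1 z + f2 z * g z))
        + (of_real (z*(1-z)) * (w z * ((c-1)/of_real z - (a+b-c)/of_real(1-z))) + of_real (1 - 2*z) * w z)
          * (f z * g1 z - f1 z * g z)) =
        (w z * f z * (of_real (z*(1-z)) * g2 z + (c-(a+b+1) * of_real z) * g1 z - a*b*g z))"
    proof -
      have e: "of_real (z*(1-z)) * f2 z = a*b*f z - (c - (a+b+1) * of_real z) * f1 z"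
        using eq[OF z] by (simp add: algebra_simps)
      have "of_real (z*(1-z)) * ((c-1)/of_real z - (a+b-c)/of_real(1-z)) + of_real (1 - 2*z)
            = c - (a+b+1) * (of_real z :: complex)"
        using zz by (simp add: field_simps)
      note K = this
      define X where "X = (of_real (z*(1-z)) :: complex)"
      define Q where "Q = ((c-1)/of_real z - (a+b-c)/of_real(1-z) :: complex)"
      define R where "R = (of_real (1 - 2*z) :: complex)"
      define C' where "C' = c - (a+b+1) * (of_real z :: complex)"
      have K': "X * Q + R = C'" using K unfolding X_def Q_def R_def C'_def .
      have e': "X * f2 z = a*b*f z - C' * f1 z" using e unfolding X_def C'_def .
      have "(X * w z) * ((f z * g2 z + f1 z * g1 z) - (f1 z * g1 z + f2 z * g z))
        + (X * (w z * Q) + R * w z) * (f z * g1 z - f1 z * g z)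
        = w z * (f z * (X * g2 z) - g z * (X * f2 z) + (X * Q + R) * (f z * g1 z - f1 z * g z))"
        by (simp add: algebra_simps)
      also have "\<dots> = w z * (f z * (X * g2 z) - g z * (a*b*f z - C' * f1 z) + C' * (f z * g1 z - f1 z * g z))"
        by (simp only: K' e')
      also have "\<dots> = w z * f z * (X * g2 z + C' * g1 z - a*b*g z)"
        by (simp add: algebra_simps)
      finally show ?thesis unfolding X_def Q_def R_def C'_def .
    qed
    ultimately show ?thesis by simp
  qed
  have "((\<lambda>z. w z * f z * (of_real (z*(1-z)) * g2 z + (c-(a+b+1) * of_real z) * g1 z - a*b*g z)) has_integral (H 1 - H 0)) {0..1}"
    by (rule fundamental_theorem_of_calculus_interior) (use cH dH in auto)
  then show ?thesis by (simp add: H_def)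
qed


lemma core_moments:
  fixes a b c :: complex and f f1 f2 w :: "real \<Rightarrow> complex"
  assumes cw: "continuous_on {0..1} w"
  and wd: "\<And>z. z \<in> {0<..<1} \<Longrightarrow> (w has_vector_derivative (w z * ((c-1)/of_real z - (a+b-c)/of_real(1-z)))) (at z)"
  and cf: "continuous_on {0..1} f" and cf1: "continuous_on {0..1} f1"
  and d1: "\<And>z. z \<in> {0<..<1} \<Longrightarrow> (f has_vector_derivative f1 z) (at z)"
  and d2: "\<And>z. z \<in> {0<..<1} \<Longrightarrow> (f1 has_vector_derivative f2 z) (at z)"
  and eq: "\<And>z. z \<in> {0<..<1} \<Longrightarrow> of_real (z*(1-z)) * f2 z + (c - (a+b+1) * of_real z) * f1 z - a*b*f z = 0"
  and nz: "\<And>m::nat. (of_nat m + a) * (of_nat m + b) \<noteq> 0"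
  shows "integral {0..1} (\<lambda>z. w z * f z * of_real (z ^ m)) = 0"
proof -
  have KL: "((\<lambda>z. w z * f z * (of_real (z*(1-z)) * g2 z + (c-(a+b+1) * of_real z) * g1 z - a*b*g z)) has_integral 0) {0..1}"
    if "\<And>z. (g has_vector_derivative g1 z) (at z)" "\<And>z. (g1 has_vector_derivative g2 z) (at z)" for g g1 g2
    by (rule core_KL[OF cw _ cf cf1 _ _ _ that]) (blast intro: wd d1 d2 eq)+
  define I where "I m = integral {0..1} (\<lambda>z. w z * f z * of_real (z ^ m))" for m
  have int: "(\<lambda>z. w z * f z * of_real (z ^ m)) integrable_on {0..1}" for m
    by (intro integrable_continuous_real continuous_intros cw cf)
  have base: "I 0 = 0"
  proof -
    have "((\<lambda>z. w z * f z * (of_real (z*(1-z)) * 0 + (c-(a+b+1) * of_real z) * 0 - a*b*1)) has_integral 0) {0..1}"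
      by (rule KL) auto
    then have "((\<lambda>z. (- a*b) * (w z * f z * of_real (z ^ 0))) has_integral 0) {0..1}"
      by (simp add: algebra_simps)
    then have "(- a*b) * I 0 = 0"
      unfolding I_def using has_integral_mult_right[OF integrable_integral[OF int[of 0]], of "- a*b"] has_integral_unique by blast
    moreover have "a * b \<noteq> 0" using nz[of 0] by simp
    ultimately show ?thesis by simp
  qed
  have step: "I (Suc m) = 0" if "I m = 0" for m
  proof -
    have g1: "((\<lambda>z. complex_of_real (z ^ (m+1))) has_vector_derivative of_real (real (m+1) * z ^ m)) (at z)" for z
      using has_vector_derivative_of_real[OF DERIV_pow[of "m+1" z UNIV]] by simp
    have g2: "((\<lambda>z. complex_of_real (real (m+1) * z ^ m)) has_vector_derivative of_real (real (m+1) * (real m * z ^ (m-1)))) (at z)" for z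
      using has_vector_derivative_of_real[OF DERIV_cmult[OF DERIV_pow[of m z UNIV], of "real (m+1)"]] by simp
    have "((\<lambda>z. w z * f z * (of_real (z*(1-z)) * of_real (real (m+1) * (real m * z ^ (m-1)))
           + (c-(a+b+1) * of_real z) * of_real (real (m+1) * z ^ m) - a*b * of_real (z ^ (m+1)))) has_integral 0) {0..1}"
      by (rule KL[OF g1 g2])
    moreover have "w z * f z * (of_real (z*(1-z)) * of_real (real (m+1) * (real m * z ^ (m-1)))
           + (c-(a+b+1) * of_real z) * of_real (real (m+1) * z ^ m) - a*b * of_real (z ^ (m+1)))
         = (of_nat (m+1) * (of_nat m + c)) * (w z * f z * of_real (z ^ m))
           - ((of_nat (m+1) + a) * (of_nat (m+1) + b)) * (w z * f z * of_real (z ^ Suc m))" for z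
    proof -
      have r: "z*(1-z) * (real (m+1) * (real m * z ^ (m-1))) = real (m+1) * real m * (z^m - z^(m+1))"
        by (cases m) (simp_all add: algebra_simps)
      have r': "(of_real (z*(1-z)) * of_real (real (m+1) * (real m * z ^ (m-1))) :: complex)
          = of_nat (m+1) * of_nat m * (of_real z ^ m - of_real z ^ (m+1))"
        using arg_cong[OF r, of "of_real :: real \<Rightarrow> complex"] by simp
      have p: "(of_real (real (m+1) * z ^ m) :: complex) = of_nat (m+1) * of_real z ^ m"
              "(of_real (z ^ (m+1)) :: complex) = of_real z * of_real z ^ m"
              "(of_real z :: complex) ^ (m+1) = of_real z * of_real z ^ m"
              "(of_real (z ^ m) :: complex) = of_real z ^ m"
        by simp_all
      show ?thesis unfolding r' p power_Suc
        by (simp add: algebra_simps)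
    qed
    ultimately have "((\<lambda>z. (of_nat (m+1) * (of_nat m + c)) * (w z * f z * of_real (z ^ m))
           - ((of_nat (m+1) + a) * (of_nat (m+1) + b)) * (w z * f z * of_real (z ^ Suc m))) has_integral 0) {0..1}"
      by simp
    moreover have "((\<lambda>z. (of_nat (m+1) * (of_nat m + c)) * (w z * f z * of_real (z ^ m))
           - ((of_nat (m+1) + a) * (of_nat (m+1) + b)) * (w z * f z * of_real (z ^ Suc m))) has_integral
           ((of_nat (m+1) * (of_nat m + c)) * I m - ((of_nat (m+1) + a) * (of_nat (m+1) + b)) * I (Suc m))) {0..1}"
      unfolding I_def
      by (intro has_integral_diff has_integral_mult_right integrable_integral int)
    ultimately have "(of_nat (m+1) * (of_nat m + c)) * I m - ((of_nat (m+1) + a) * (of_nat (m+1) + b)) * I (Suc m) = 0"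
      using has_integral_unique by blast
    then show ?thesis using that nz[of "m+1"] by simp
  qed
  have "I m = 0" by (induction m) (use base step in auto)
  then show ?thesis unfolding I_def .
qed


lemma core:
  fixes a b c :: complex and f f1 f2 :: "real \<Rightarrow> complex"
  assumes rc: "1 < Re c" and re: "1 < Re (a + b + 1 - c)"
  and nz: "\<And>m::nat. (of_nat m + a) * (of_nat m + b) \<noteq> 0"
  and cf: "continuous_on {0..1} f" and cf1: "continuous_on {0..1} f1"
  and d1: "\<And>z. z \<in> {0<..<1} \<Longrightarrow> (f has_vector_derivative f1 z) (at z)"
  and d2: "\<And>z. z \<in> {0<..<1} \<Longrightarrow> (f1 has_vector_derivative f2 z) (at z)"
  and eq: "\<And>z. z \<in> {0<..<1} \<Longrightarrow> of_real (z*(1-z)) * f2 z + (c - (a+b+1) * of_real z) * f1 z - a*b*f z = 0"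
  shows "\<forall>z\<in>{0..1}. f z = 0"
proof -
  define w where "w z = rp z (c-1) * rp (1-z) (a+b-c)" for z
  have cw: "continuous_on {0..1} w"
  proof -
    have c1: "continuous_on {0..1} (\<lambda>z. rp z (c-1))"
      by (rule continuous_on_subset[OF rp_cont]) (use rc in auto)
    have c2: "continuous_on {0..1} (\<lambda>z. rp (1-z) (a+b-c))"
      by (rule continuous_on_compose2[OF rp_cont[of "a+b-c"], of "{0..1}" "\<lambda>z. 1-z"])
         (use re in \<open>auto intro!: continuous_intros\<close>)
    show ?thesis unfolding w_def by (intro continuous_on_mult c1 c2)
  qed
  have wd: "(w has_vector_derivative (w z * ((c-1)/of_real z - (a+b-c)/of_real(1-z)))) (at z)"
    if z: "z \<in> {0<..<1}" for z
  proof -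
    have "(w has_vector_derivative (rp z (c-1) * (- ((a+b-c) * rp (1 - z) (a+b-c) / of_real (1 - z)))
        + (c-1) * rp z (c-1) / of_real z * rp (1-z) (a+b-c))) (at z)"
      unfolding w_def using z
      by (intro has_vector_derivative_mult rp_deriv rp_deriv2) auto
    then show ?thesis
      by (simp add: w_def algebra_simps diff_divide_distrib)
  qed
  have mom: "integral {0..1} (\<lambda>z. w z * f z * of_real (z ^ m)) = 0" for m
    by (rule core_moments[OF cw _ cf cf1 _ _ _ nz]) (blast intro: wd d1 d2 eq)+
  have int: "(\<lambda>z. w z * f z * of_real (z ^ m)) integrable_on {0..1}" for m
    by (intro integrable_continuous_real continuous_intros cw cf)
  have polyI: "((\<lambda>z. w z * f z * of_real (\<Sum>i\<le>n. a i * z^i)) has_integral 0) {0..1}" for a n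
  proof -
    have "((\<lambda>z. \<Sum>i\<le>n. of_real (a i) * (w z * f z * of_real (z ^ i))) has_integral (\<Sum>i\<le>n. of_real (a i) * 0)) {0..1}"
      by (intro has_integral_sum finite_atMost has_integral_mult_right)
         (metis int mom integrable_integral)
    moreover have "(\<lambda>z. \<Sum>i\<le>n. of_real (a i) * (w z * f z * of_real (z ^ i))) = (\<lambda>z. w z * f z * of_real (\<Sum>i\<le>n. a i * z^i))"
      by (simp add: sum_distrib_left algebra_simps)
    ultimately show ?thesis by simp
  qed
  have polyR: "((\<lambda>z. w z * f z * of_real (p z)) has_integral 0) {0..1}" if "polynomial_function (p :: real \<Rightarrow> real)" for p
  proof -
    from that obtain a n where "p = (\<lambda>x. \<Sum>i\<le>n. a i * x^i)"
      unfolding real_polynomial_function_eq[symmetric] real_polynomial_function_iff_sum by blast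
    then show ?thesis using polyI by simp
  qed
  define h where "h z = cnj (w z * f z)" for z
  have ch: "continuous_on {0..1} h" unfolding h_def by (intro continuous_intros cw cf)
  have cwf: "continuous_on {0..1} (\<lambda>z. w z * f z)" by (intro continuous_intros cw cf)
  define J where "J = integral {0..1} (\<lambda>z. w z * f z * h z)"
  define K where "K = integral {0..1} (\<lambda>z. norm (w z * f z))"
  have intK: "(\<lambda>z. norm (w z * f z)) integrable_on {0..1}"
    by (intro integrable_continuous_real continuous_intros cw cf)
  have K0: "0 \<le> K" unfolding K_def by (rule integral_nonneg[OF intK]) auto
  have bound: "norm J \<le> 2 * e * K" if e: "0 < e" for e
  proof -
    obtain p1 where p1: "polynomial_function p1" "\<forall>x\<in>{0..1}. norm (Re (h x) - p1 x) < e"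
      using Stone_Weierstrass_polynomial_function[of "{0..1::real}" "\<lambda>x. Re (h x)" e] e ch
      by (auto intro: continuous_intros)
    obtain p2 where p2: "polynomial_function p2" "\<forall>x\<in>{0..1}. norm (Im (h x) - p2 x) < e"
      using Stone_Weierstrass_polynomial_function[of "{0..1::real}" "\<lambda>x. Im (h x)" e] e ch
      by (auto intro: continuous_intros)
    define q where "q x = of_real (p1 x) + \<i> * of_real (p2 x)" for x
    have cq: "continuous_on {0..1} q"
      unfolding q_def using p1(1) p2(1)
      by (intro continuous_intros) (auto intro: continuous_on_polymonial_function)
    have "((\<lambda>z. w z * f z * of_real (p1 z) + \<i> * (w z * f z * of_real (p2 z))) has_integral (0 + \<i> * 0)) {0..1}"
      by (intro has_integral_add has_integral_mult_right polyR p1(1) p2(1))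
    then have iq: "((\<lambda>z. w z * f z * q z) has_integral 0) {0..1}"
      by (simp add: q_def algebra_simps)
    have "((\<lambda>z. w z * f z * h z - w z * f z * q z) has_integral (J - 0)) {0..1}"
      unfolding J_def
      by (intro has_integral_diff iq integrable_integral integrable_continuous_real continuous_intros cw cf ch)
    then have J: "J = integral {0..1} (\<lambda>z. w z * f z * (h z - q z))"
      by (simp add: algebra_simps integral_unique)
    have "norm J \<le> integral {0..1} (\<lambda>z. 2 * e * norm (w z * f z))"
      unfolding J
    proof (rule integral_norm_bound_integral)
      show "(\<lambda>z. w z * f z * (h z - q z)) integrable_on {0..1}"
        by (intro integrable_continuous_real continuous_intros cw cf ch cq)
      show "(\<lambda>z. 2 * e * norm (w z * f z)) integrable_on {0..1}"
        by (intro integrable_continuous_real continuous_intros cw cf)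
      fix z :: real assume z: "z \<in> {0..1}"
      have "norm (h z - q z) \<le> \<bar>Re (h z - q z)\<bar> + \<bar>Im (h z - q z)\<bar>" by (rule cmod_le)
      also have "\<dots> \<le> 2 * e"
      proof -
        have a1: "\<bar>Re (h z) - p1 z\<bar> < e" using p1(2) z by auto
        have a2: "\<bar>Im (h z) - p2 z\<bar> < e" using p2(2) z by auto
        have "Re (h z - q z) = Re (h z) - p1 z" "Im (h z - q z) = Im (h z) - p2 z"
          by (simp_all add: q_def)
        then show ?thesis using a1 a2 by linarith
      qed
      finally have "norm (h z - q z) \<le> 2 * e" .
      then show "norm (w z * f z * (h z - q z)) \<le> 2 * e * norm (w z * f z)"
        unfolding norm_mult
        by (subst mult.commute[of "2*e"], rule mult_left_mono) auto
    qed
    also have "\<dots> = 2 * e * K" unfolding K_def by simp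
    finally show ?thesis .
  qed
  have J0: "J = 0"
  proof (rule ccontr)
    assume "J \<noteq> 0"
    then have nJ: "0 < norm J" by simp
    define e where "e = norm J / (4 * (K + 1))"
    have e0: "0 < e" unfolding e_def using nJ K0 by simp
    have "norm J \<le> 2 * e * K" by (rule bound[OF e0])
    also have "2 * e * K < norm J"
      unfolding e_def using nJ K0 by (simp add: field_simps) (intro add_pos_nonneg mult_nonneg_nonneg, auto)
    finally show False by simp
  qed
  define N where "N z = norm (w z * f z) ^ 2" for z
  have cN: "continuous_on {0..1} N" unfolding N_def by (intro continuous_intros cw cf)
  have "(N has_integral integral {0..1} N) {0..1}"
    by (intro integrable_integral integrable_continuous_real cN)
  then have "((\<lambda>z. complex_of_real (N z)) has_integral of_real (integral {0..1} N)) {0..1}"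
    by (rule has_integral_of_real)
  moreover have "(\<lambda>z. complex_of_real (N z)) = (\<lambda>z. w z * f z * h z)"
    unfolding N_def h_def complex_norm_square by simp
  ultimately have "of_real (integral {0..1} N) = J"
    unfolding J_def by (simp add: integral_unique)
  then have "integral {0..1} N = 0" using J0 by simp
  then have NI: "(N has_integral 0) {0..1}"
    using integrable_integral[OF integrable_continuous_real[OF cN]] by simp
  have NI': "(N has_integral 0) (cbox 0 1)" using NI by (simp add: cbox_interval)
  have N0: "N z = 0" if "z \<in> {0..1}" for z
  proof (rule has_integral_0_cbox_imp_0[OF _ _ NI'])
    show "continuous_on (cbox 0 1) N" using cN by (simp add: cbox_interval)
    show "0 \<le> N x" for x unfolding N_def by simp
    show "box 0 (1::real) \<noteq> {}" by simp
    show "z \<in> cbox 0 1" using that by (simp add: cbox_interval)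
  qed
  have fz: "f z = 0" if z: "z \<in> {0<..<1}" for z
  proof -
    have "w z \<noteq> 0" unfolding w_def using z by (simp add: rp_nz)
    moreover have "w z * f z = 0" using N0[of z] z by (simp add: N_def)
    ultimately show ?thesis by simp
  qed
  have cl: "closure {0<..<1::real} = {0..1}" by simp
  show ?thesis
  proof
    fix z :: real assume "z \<in> {0..1}"
    then show "f z = 0"
      using continuous_constant_on_closure[of "{0<..<1::real}" f 0] cf fz unfolding cl by blast
  qed
qed


lemma zero_deriv:
  fixes F :: "real \<Rightarrow> complex"
  assumes "a < b" "x \<in> {a..b}" "\<forall>y\<in>{a..b}. F y = 0"
    and "(F has_vector_derivative F') (at x within {a..b})"
  shows "F' = 0"
proof -
  have "((\<lambda>y. 0) has_vector_derivative 0) (at x within {a..b})" by simp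
  then have "(F has_vector_derivative 0) (at x within {a..b})"
    by (rule has_vector_derivative_transform_within[of _ _ _ _ 1]) (use assms in auto)
  then show ?thesis
    using vector_derivative_unique_within_closed_interval[of a b x F F' 0] assms by simp
qed

definition hypE :: "complex \<Rightarrow> complex \<Rightarrow> complex \<Rightarrow> (nat \<Rightarrow> real \<Rightarrow> complex) \<Rightarrow> nat \<Rightarrow> real \<Rightarrow> complex" where
  "hypE a b c D k z = of_real (z*(1-z)) * D (Suc (Suc k)) z
     + (c + of_nat k - (a + b + 1 + 2 * of_nat k) * of_real z) * D (Suc k) z
     - (a + of_nat k) * (b + of_nat k) * D k z"

lemma hyp_ladder:
  assumes D: "\<forall>n. \<forall>x\<in>{0..1}. (D n has_vector_derivative D (Suc n) x) (at x within {0..1})"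
    and E: "\<forall>z\<in>{0..1}. hypE a b c D k z = 0"
  shows "\<forall>z\<in>{0..1}. hypE a b c D (Suc k) z = 0"
proof
  fix z :: real assume z: "z \<in> {0..1}"
  have dp: "((\<lambda>z. complex_of_real (z*(1-z))) has_vector_derivative of_real (1 - 2*z)) (at z within {0..1})"
    by (auto intro!: derivative_eq_intros)
  have dl: "((\<lambda>z. c + of_nat k - (a + b + 1 + 2 * of_nat k) * complex_of_real z) has_vector_derivative
      (0 - (a + b + 1 + 2 * of_nat k) * 1)) (at z within {0..1})"
    by (intro has_vector_derivative_diff has_vector_derivative_mult_right has_vector_derivative_const)
       (auto intro!: derivative_eq_intros)
  have "((\<lambda>z. hypE a b c D k z) has_vector_derivative
      (of_real (z*(1-z)) * D (Suc (Suc (Suc k))) z + of_real (1 - 2*z) * D (Suc (Suc k)) z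
       + ((c + of_nat k - (a + b + 1 + 2 * of_nat k) * of_real z) * D (Suc (Suc k)) z
          + (0 - (a + b + 1 + 2 * of_nat k) * 1) * D (Suc k) z)
       - (a + of_nat k) * (b + of_nat k) * D (Suc k) z)) (at z within {0..1})"
    unfolding hypE_def
    by (intro has_vector_derivative_add has_vector_derivative_diff has_vector_derivative_mult
        has_vector_derivative_mult_right dp dl D[rule_format, OF z])
  from zero_deriv[OF _ z _ this] E
  have "of_real (z*(1-z)) * D (Suc (Suc (Suc k))) z + of_real (1 - 2*z) * D (Suc (Suc k)) z
       + ((c + of_nat k - (a + b + 1 + 2 * of_nat k) * of_real z) * D (Suc (Suc k)) z
          + (0 - (a + b + 1 + 2 * of_nat k) * 1) * D (Suc k) z)
       - (a + of_nat k) * (b + of_nat k) * D (Suc k) z = 0" by simp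
  then show "hypE a b c D (Suc k) z = 0"
    unfolding hypE_def by (simp add: algebra_simps)
qed


lemma dwithin_D:
  assumes ab: "a < b" and D: "\<forall>n. \<forall>x\<in>{a..b}. (D n has_vector_derivative D (Suc n) x) (at x within {a..b})"
    and x: "x \<in> {a..b}"
  shows "dwithin {a..b} (D 0) x = D (Suc 0) x"
    and "dwithin {a..b} (dwithin {a..b} (D 0)) x = D (Suc (Suc 0)) x"
proof -
  have d1: "dwithin {a..b} (D 0) y = D (Suc 0) y" if "y \<in> {a..b}" for y
    unfolding dwithin_def
    by (rule vector_derivative_within_closed_interval[OF ab that]) (use D that in auto)
  then show "dwithin {a..b} (D 0) x = D (Suc 0) x" using x by simp
  have "(dwithin {a..b} (D 0) has_vector_derivative D (Suc (Suc 0)) x) (at x within {a..b})"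
    by (rule has_vector_derivative_transform_within[of "D (Suc 0)" _ _ _ 1]) (use D x d1 in auto)
  then show "dwithin {a..b} (dwithin {a..b} (D 0)) x = D (Suc (Suc 0)) x"
    unfolding dwithin_def[of _ "dwithin {a..b} (D 0)"]
    by (rule vector_derivative_within_closed_interval[OF ab x])
qed

lemma re_pos_nz: "0 < Re (x::complex) \<Longrightarrow> x \<noteq> 0"
  by auto

lemma at_interior01: "z \<in> {a<..<b} \<Longrightarrow> at z within {a..b} = at (z::real)"
  by (rule at_within_interior) simp

lemma part1:
  fixes s :: real and l :: complex and \<psi> :: "real \<Rightarrow> complex"
  assumes s: "0 \<le> s" "s < 1" and l: "Re l > -1" "l \<noteq> 0" "l \<noteq> 1"
  and C: "C_inf_on {0..1} \<psi>"
  and eq: "\<forall>z\<in>{0..1}. of_real (z * (1 - z)) * dwithin {0..1} (dwithin {0..1} \<psi>) z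
                  + (l - of_real s - 2 * l * of_real z) * dwithin {0..1} \<psi> z
                  - l * (l - 1) * \<psi> z = 0"
  shows "\<forall>z\<in>{0..1}. \<psi> z = 0"
proof -
  from C obtain D where D0: "D 0 = \<psi>"
    and D: "\<forall>n. \<forall>x\<in>{0..1}. (D n has_vector_derivative D (Suc n) x) (at x within {0..1})"
    unfolding C_inf_on_def by blast
  define a where "a = l - 1"
  define b where "b = l"
  define c where "c = l - of_real s"
  have E0: "\<forall>z\<in>{0..1}. hypE a b c D 0 z = 0"
  proof
    fix z :: real assume z: "z \<in> {0..1}"
    have "dwithin {0..1} (D 0) z = D (Suc 0) z" "dwithin {0..1} (dwithin {0..1} (D 0)) z = D (Suc (Suc 0)) z"
      using dwithin_D[OF _ D z] by auto
    then show "hypE a b c D 0 z = 0"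
      using eq[rule_format, OF z] unfolding hypE_def a_def b_def c_def D0[symmetric]
      by (simp add: algebra_simps)
  qed
  have Ek: "\<forall>z\<in>{0..1}. hypE a b c D k z = 0" for k
    by (induction k) (use E0 hyp_ladder[OF D] in auto)
  have D3: "\<forall>z\<in>{0..1}. D 3 z = 0"
  proof (rule core[of "l - of_real s + 3" "l + 2" "l + 3" "D 3" "D 4" "D 5"])
    show "1 < Re (l - complex_of_real s + 3)" using s l by simp
    show "1 < Re (l + 2 + (l + 3) + 1 - (l - complex_of_real s + 3))" using s l by simp
    show "(of_nat m + (l + 2)) * (of_nat m + (l + 3)) \<noteq> 0" for m
    proof -
      have "Re (of_nat m + (l + 2)) > 0" "Re (of_nat m + (l + 3)) > 0" using l by auto
      from re_pos_nz[OF this(1)] re_pos_nz[OF this(2)] show ?thesis by simp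
    qed
    show "continuous_on {0..1} (D 3)"
      by (rule continuous_on_vector_derivative[of _ _ "D 4"]) (use D in \<open>auto simp: numeral_eq_Suc\<close>)
    show "continuous_on {0..1} (D 4)"
      by (rule continuous_on_vector_derivative[of _ _ "D 5"]) (use D in \<open>auto simp: numeral_eq_Suc\<close>)
    show "(D 3 has_vector_derivative D 4 z) (at z)" if "z \<in> {0<..<1}" for z
    proof -
      have "(D 3 has_vector_derivative D (Suc 3) z) (at z within {0..1})" using bspec[OF spec[OF D, of 3], of z] that by simp
      then show ?thesis by (simp add: at_interior01[OF that])
    qed
    show "(D 4 has_vector_derivative D 5 z) (at z)" if "z \<in> {0<..<1}" for z
    proof -
      have "(D 4 has_vector_derivative D (Suc 4) z) (at z within {0..1})" using bspec[OF spec[OF D, of 4], of z] that by simp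
      then show ?thesis by (simp add: at_interior01[OF that])
    qed
    show "of_real (z*(1-z)) * D 5 z + (l - of_real s + 3 - (l + 2 + (l + 3) + 1) * of_real z) * D 4 z
           - (l + 2) * (l + 3) * D 3 z = 0" if "z \<in> {0<..<1}" for z
    proof -
      have h: "hypE a b c D 3 z = 0" using Ek[of 3] that by auto
      have c1: "c + of_nat 3 = l - of_real s + 3" by (simp add: c_def)
      have c2: "a + b + 1 + 2 * of_nat 3 = l + 2 + (l + 3) + 1" by (simp add: a_def b_def)
      have c3: "a + of_nat 3 = l + 2" "b + of_nat 3 = l + 3" by (simp_all add: a_def b_def)
      have n: "Suc (Suc 3) = 5" "Suc 3 = 4" "Suc 4 = 5" by simp_all
      from h show ?thesis unfolding hypE_def c1 c2 c3 n(1,2) n(3) .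
    qed
  qed
  have D4: "\<forall>z\<in>{0..1}. D 4 z = 0"
  proof
    fix z :: real assume z: "z \<in> {0..1}"
    have "(D 3 has_vector_derivative D (Suc 3) z) (at z within {0..1})"
      using bspec[OF spec[OF D, of 3], of z] z by simp
    from zero_deriv[OF _ z D3 this] show "D 4 z = 0" by simp
  qed
  have D2: "\<forall>z\<in>{0..1}. D 2 z = 0"
  proof
    fix z :: real assume z: "z \<in> {0..1}"
    have "(a + 2) * (b + 2) \<noteq> 0"
    proof -
      have "Re (a + 2) > 0" "Re (b + 2) > 0" using l unfolding a_def b_def by auto
      from re_pos_nz[OF this(1)] re_pos_nz[OF this(2)] show ?thesis by simp
    qed
    moreover have "hypE a b c D 2 z = 0" using Ek z by blast
    ultimately show "D 2 z = 0" using D3 D4 z unfolding hypE_def by (simp add: numeral_eq_Suc)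
  qed
  have D1: "\<forall>z\<in>{0..1}. D 1 z = 0"
  proof
    fix z :: real assume z: "z \<in> {0..1}"
    have "(a + 1) * (b + 1) \<noteq> 0"
    proof -
      have "a + 1 \<noteq> 0" using l unfolding a_def by simp
      moreover have "Re (b + 1) > 0" using l unfolding b_def by auto
      ultimately show ?thesis using re_pos_nz by simp
    qed
    moreover have "hypE a b c D 1 z = 0" using Ek z by blast
    ultimately show "D 1 z = 0" using D2 D3 z unfolding hypE_def by (simp add: numeral_eq_Suc)
  qed
  show ?thesis
  proof
    fix z :: real assume z: "z \<in> {0..1}"
    have "a * b \<noteq> 0" using l unfolding a_def b_def by simp
    moreover have "hypE a b c D 0 z = 0" using Ek z by blast
    ultimately have "D 0 z = 0" using D1 D2 z unfolding hypE_def by (simp add: numeral_eq_Suc)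
    then show "\<psi> z = 0" using D0 by simp
  qed
qed



lemma ladder_identity:
  fixes G S Y \<mu> d0 d1 d2 d3 :: complex
  assumes G: "G = 1 + S * Y" "G \<noteq> 0"
  defines "\<alpha> \<equiv> 1 - S^2"
  shows "((\<mu>+1)^2 + (\<mu>+1) - 2*\<alpha>*(\<mu>+1)/G) * (S*\<mu>*d0 + G*d1)
       + (2*(\<mu>+1) + 2 - 2*\<alpha>/G) * Y * (S*(\<mu>+1)*d1 + G*d2)
       + (Y^2 - 1) * (S*(\<mu>+2)*d2 + G*d3)
     = G * ((2*\<alpha>*\<mu>*S/G^2) * d0 + (\<mu>^2 + \<mu> - 2*\<alpha>*\<mu>/G) * d1
            + ((2*\<mu>+2 - 2*\<alpha>/G) + (2*\<alpha>*S/G^2)*Y) * d1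
            + (2*\<mu>+2 - 2*\<alpha>/G) * Y * d2 + 2*Y*d2 + (Y^2 - 1) * d3)
       + S*(\<mu>+2) * ((\<mu>^2 + \<mu> - 2*\<alpha>*\<mu>/G) * d0 + (2*\<mu>+2 - 2*\<alpha>/G) * Y * d1 + (Y^2-1) * d2)"
  using G(2) unfolding \<alpha>_def
  apply (simp add: field_simps power2_eq_square)
  apply (simp only: G(1))?
  apply (simp add: algebra_simps)?
  done

lemma kill_identity:
  fixes G S Y \<mu> d0 :: complex
  assumes G: "G = 1 + S * Y" "G \<noteq> 0"
  defines "\<alpha> \<equiv> 1 - S^2"
  shows "(\<mu>^2 + \<mu> - 2*\<alpha>*\<mu>/G) * d0 + (2*\<mu>+2 - 2*\<alpha>/G) * Y * (- S*\<mu>*d0/G)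
        + (Y^2 - 1) * (S^2*\<mu>*(\<mu>+1)*d0/G^2) = \<alpha>*\<mu>*(\<mu>-1)/G^2 * d0"
  using G(2) unfolding \<alpha>_def
  apply (simp add: field_simps power2_eq_square)
  apply (simp only: G(1))?
  apply (simp add: algebra_simps)?
  done

lemma distrib3:
  fixes Z a0 a1 a2 K b0 b1 c d0 d1 d2 :: complex
  shows "Z*(1-Z)*(a0*d0 + a1*d1 + a2*d2) + K*(b0*d0 + b1*d1) - c*d0
       = (Z*(1-Z)*a0 + K*b0 - c)*d0 + (Z*(1-Z)*a1 + K*b1)*d1 + (Z*(1-Z)*a2)*d2"
  by (simp add: algebra_simps)

lemma distrib3b:
  fixes k x0 x1 x2 d0 d1 d2 :: complex
  shows "(-k*x0)*d0 + (-k*x1)*d1 + (-k*x2)*d2 = -k*(x0*d0 + x1*d1 + x2*d2)"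
  by (simp add: algebra_simps)

lemma transform_identity:
  fixes Gc S Z \<mu> d0 d1 d2 A :: complex
  assumes G: "Gc = 1 + S - 2*S*Z" "Gc \<noteq> 0" and A: "A = 1 - S^2" "A \<noteq> 0"
  defines "M \<equiv> (2*Z - 1 - S)/Gc"
  shows "Z*(1-Z) * (4*S^2/Gc^2*\<mu>*(\<mu>+1)*d0 + 8*S*A/Gc^3*(\<mu>+1)*d1 + 4*A^2/Gc^4*d2)
       + ((\<mu> - S) - ((\<mu>-1) + \<mu> + 1)*Z) * (2*S/Gc*\<mu>*d0 + 2*A/Gc^2*d1)
       - (\<mu>-1)*\<mu>*d0
       = -(A/Gc^2) * ((\<mu>^2 + \<mu> - 2*A*\<mu>/(1 + S*M)) * d0 + (2*\<mu>+2 - 2*A/(1 + S*M)) * M * d1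
             + (M^2 - 1) * d2)"
proof -
  have g: "1 + S*M = A/Gc"
    using G A unfolding M_def by (simp add: field_simps power2_eq_square)
  have g1: "2*A*\<mu>/(1 + S*M) = 2*\<mu>*Gc" "2*A/(1 + S*M) = 2*Gc"
    unfolding g using G(2) A(2) by (simp_all add: field_simps)
  define N where "N = 2*Z - 1 - S"
  have M: "M = N / Gc" unfolding M_def N_def ..
  have p2: "N^2 - Gc^2 = - 4*A*Z*(1-Z)"
    unfolding N_def G(1) A(1) by (simp add: algebra_simps power2_eq_square)
  have p1: "4*S*Z*(1-Z)*(\<mu>+1) + (\<mu> - S - 2*\<mu>*Z)*Gc = -(\<mu>+1 - Gc)*N"
    unfolding N_def G(1) by (simp add: algebra_simps)
  have p0: "4*S^2*Z*(1-Z)*\<mu>*(\<mu>+1) + 2*S*\<mu>*(\<mu> - S - 2*\<mu>*Z)*Gc - (\<mu>-1)*\<mu>*Gc^2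
            = -A*(\<mu>^2+\<mu>-2*\<mu>*Gc)"
    unfolding G(1) A(1) by (simp add: algebra_simps power2_eq_square)
  have c2: "Z*(1-Z)*(4*A^2/Gc^4) = -(A/Gc^2)*(M^2 - 1)"
  proof -
    have "M^2 - 1 = (N^2 - Gc^2)/Gc^2" unfolding M using G(2) by (simp add: field_simps)
    then have m: "M^2 - 1 = (- 4*A*Z*(1-Z))/Gc^2" unfolding p2 .
    have gg: "Gc^4 = Gc^2 * Gc^2" by (simp add: power_add[symmetric])
    show ?thesis unfolding m gg using G(2) by (simp add: field_simps power2_eq_square)
  qed
  have c1: "Z*(1-Z)*(8*S*A/Gc^3*(\<mu>+1)) + ((\<mu> - S) - ((\<mu>-1) + \<mu> + 1)*Z)*(2*A/Gc^2)
            = -(A/Gc^2)*((2*\<mu>+2 - 2*Gc)*M)"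
  proof -
    have "Z*(1-Z)*(8*S*A/Gc^3*(\<mu>+1)) + ((\<mu> - S) - ((\<mu>-1) + \<mu> + 1)*Z)*(2*A/Gc^2)
          = (2*A/Gc^3) * (4*S*Z*(1-Z)*(\<mu>+1) + (\<mu> - S - 2*\<mu>*Z)*Gc)"
      using G(2) by (simp add: field_simps eval_nat_numeral)
    also have "\<dots> = (2*A/Gc^3) * (-(\<mu>+1 - Gc)*N)" unfolding p1 ..
    also have "\<dots> = -(A/Gc^2)*((2*\<mu>+2 - 2*Gc)*M)"
      unfolding M using G(2) by (simp add: field_simps eval_nat_numeral)
    finally show ?thesis .
  qed
  have c0: "Z*(1-Z)*(4*S^2/Gc^2*\<mu>*(\<mu>+1)) + ((\<mu> - S) - ((\<mu>-1) + \<mu> + 1)*Z)*(2*S/Gc*\<mu>) - (\<mu>-1)*\<mu>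
            = -(A/Gc^2)*(\<mu>^2 + \<mu> - 2*\<mu>*Gc)"
  proof -
    have "Z*(1-Z)*(4*S^2/Gc^2*\<mu>*(\<mu>+1)) + ((\<mu> - S) - ((\<mu>-1) + \<mu> + 1)*Z)*(2*S/Gc*\<mu>) - (\<mu>-1)*\<mu>
       = (4*S^2*Z*(1-Z)*\<mu>*(\<mu>+1) + 2*S*\<mu>*(\<mu> - S - 2*\<mu>*Z)*Gc - (\<mu>-1)*\<mu>*Gc^2) / Gc^2"
      using G(2) by (simp add: field_simps eval_nat_numeral)
    also have "\<dots> = -(A/Gc^2)*(\<mu>^2 + \<mu> - 2*\<mu>*Gc)" unfolding p0 by simp
    finally show ?thesis .
  qed
  have L: "Z*(1-Z) * (4*S^2/Gc^2*\<mu>*(\<mu>+1)*d0 + 8*S*A/Gc^3*(\<mu>+1)*d1 + 4*A^2/Gc^4*d2)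
       + ((\<mu> - S) - ((\<mu>-1) + \<mu> + 1)*Z) * (2*S/Gc*\<mu>*d0 + 2*A/Gc^2*d1)
       - (\<mu>-1)*\<mu>*d0
       = (Z*(1-Z)*(4*S^2/Gc^2*\<mu>*(\<mu>+1)) + ((\<mu> - S) - ((\<mu>-1) + \<mu> + 1)*Z)*(2*S/Gc*\<mu>) - (\<mu>-1)*\<mu>) * d0
         + (Z*(1-Z)*(8*S*A/Gc^3*(\<mu>+1)) + ((\<mu> - S) - ((\<mu>-1) + \<mu> + 1)*Z)*(2*A/Gc^2)) * d1
         + (Z*(1-Z)*(4*A^2/Gc^4)) * d2"
    by (rule distrib3)
  show ?thesis unfolding L c0 c1 c2 g1 by (rule distrib3b)
qed


definition e2E :: "real \<Rightarrow> real \<Rightarrow> complex \<Rightarrow> (nat \<Rightarrow> real \<Rightarrow> complex) \<Rightarrow> real \<Rightarrow> complex" where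
  "e2E \<alpha> s \<mu> D y = (\<mu>\<^sup>2 + \<mu> - 2 * of_real \<alpha> * \<mu> / of_real (1 + s * y)) * D 0 y
    + (2 * \<mu> + 2 - 2 * of_real \<alpha> / of_real (1 + s * y)) * of_real y * D (Suc 0) y
    + of_real (y\<^sup>2 - 1) * D (Suc (Suc 0)) y"

definition Tseq :: "real \<Rightarrow> complex \<Rightarrow> (nat \<Rightarrow> real \<Rightarrow> complex) \<Rightarrow> nat \<Rightarrow> real \<Rightarrow> complex" where
  "Tseq s \<mu> D n y = of_real s * (\<mu> + of_nat n) * D n y + of_real (1 + s * y) * D (Suc n) y"

lemma T_deriv:
  assumes D: "\<forall>n. \<forall>x\<in>{-1..1}. (D n has_vector_derivative D (Suc n) x) (at x within {-1..1})"
  shows "\<forall>n. \<forall>x\<in>{-1..1}. (Tseq s \<mu> D n has_vector_derivative Tseq s \<mu> D (Suc n) x) (at x within {-1..1})"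
proof (intro allI ballI)
  fix n and x :: real assume x: "x \<in> {-1..1}"
  have g: "((\<lambda>y. complex_of_real (1 + s * y)) has_vector_derivative of_real s) (at x within {-1..1})"
    by (auto intro!: derivative_eq_intros)
  have "((\<lambda>y. of_real s * (\<mu> + of_nat n) * D n y + of_real (1 + s * y) * D (Suc n) y) has_vector_derivative
        (of_real s * (\<mu> + of_nat n) * D (Suc n) x + (of_real (1 + s * x) * D (Suc (Suc n)) x + of_real s * D (Suc n) x)))
        (at x within {-1..1})"
    by (intro has_vector_derivative_add has_vector_derivative_mult_right has_vector_derivative_mult g
        D[rule_format, OF x])
  then show "(Tseq s \<mu> D n has_vector_derivative Tseq s \<mu> D (Suc n) x) (at x within {-1..1})"
    unfolding Tseq_def[abs_def] by (simp add: algebra_simps)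
qed

lemma inv_deriv:
  assumes "1 + s * y \<noteq> 0"
  shows "((\<lambda>y. c / complex_of_real (1 + s * y)) has_vector_derivative (c * of_real (- s / (1 + s * y)^2))) (at y within S)"
proof -
  have "((\<lambda>y. 1 / (1 + s * y)) has_real_derivative (- s / (1 + s * y)^2)) (at y within S)"
    using assms by (auto intro!: derivative_eq_intros simp: field_simps power2_eq_square)
  then have "((\<lambda>y. c * complex_of_real (1 / (1 + s * y))) has_vector_derivative (c * of_real (- s / (1 + s * y)^2))) (at y within S)"
    by (intro has_vector_derivative_mult_right has_vector_derivative_of_real)
  then show ?thesis by (simp add: divide_inverse)
qed


lemma gpos: "0 \<le> s \<Longrightarrow> s < 1 \<Longrightarrow> y \<in> {-1..1::real} \<Longrightarrow> 0 < 1 + s * y"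
proof -
  assume s: "0 \<le> s" "s < 1" and y: "y \<in> {-1..1::real}"
  have "s * (-1) \<le> s * y" using s y by (intro mult_left_mono) auto
  then show ?thesis using s by linarith
qed

lemma e2E_deriv:
  fixes \<alpha> s y :: real and \<mu> :: complex
  assumes s: "0 \<le> s" "s < 1" and y: "y \<in> {-1..1}"
    and D: "\<forall>n. \<forall>x\<in>{-1..1}. (D n has_vector_derivative D (Suc n) x) (at x within {-1..1})"
  defines "Gc \<equiv> complex_of_real (1 + s * y)" and "S \<equiv> complex_of_real s" and "Y \<equiv> complex_of_real y"
    and "a \<equiv> complex_of_real \<alpha>"
  shows "((\<lambda>y. e2E \<alpha> s \<mu> D y) has_vector_derivative
     ((2*a*\<mu>*S/Gc^2) * D 0 y + (\<mu>^2 + \<mu> - 2*a*\<mu>/Gc) * D (Suc 0) y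
       + ((2*\<mu>+2 - 2*a/Gc) + (2*a*S/Gc^2)*Y) * D (Suc 0) y
       + (2*\<mu>+2 - 2*a/Gc) * Y * D (Suc (Suc 0)) y + 2*Y*D (Suc (Suc 0)) y
       + (Y^2 - 1) * D (Suc (Suc (Suc 0))) y)) (at y within {-1..1})"
proof -
  have g: "1 + s * y \<noteq> 0" using gpos[OF s y] by simp
  have dY: "((\<lambda>y. complex_of_real y) has_vector_derivative 1) (at y within {-1..1})"
    using has_vector_derivative_of_real[OF DERIV_ident] by simp
  have "((\<lambda>y. y\<^sup>2 - 1) has_real_derivative (2 * y)) (at y within {-1..1})"
    by (auto intro!: derivative_eq_intros)
  then have dC: "((\<lambda>y. complex_of_real (y\<^sup>2 - 1)) has_vector_derivative of_real (2 * y)) (at y within {-1..1})"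
    by (rule has_vector_derivative_of_real)
  show ?thesis
    unfolding e2E_def
    apply (rule has_vector_derivative_eq_rhs)
     apply (rule has_vector_derivative_add | rule has_vector_derivative_mult | rule has_vector_derivative_diff
       | rule has_vector_derivative_const | rule inv_deriv | rule dY | rule dC | rule D[rule_format, OF y] | rule g)+
    using g unfolding Gc_def S_def Y_def a_def
    apply (simp add: field_simps power2_eq_square)
    done
qed


lemma e2E_alt:
  "e2E \<alpha> s \<mu> D y = (\<mu>^2 + \<mu> - 2 * of_real \<alpha>*\<mu>/of_real (1 + s*y)) * D 0 y
     + (2*\<mu>+2 - 2 * of_real \<alpha>/of_real (1 + s*y)) * of_real y * D (Suc 0) y
     + ((of_real y)^2 - 1) * D (Suc (Suc 0)) y"
  unfolding e2E_def by simp

lemma T_ladder: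
  fixes \<alpha> s :: real and \<mu> :: complex
  assumes a: "\<alpha> = 1 - s^2" and s: "0 \<le> s" "s < 1"
    and D: "\<forall>n. \<forall>x\<in>{-1..1}. (D n has_vector_derivative D (Suc n) x) (at x within {-1..1})"
    and E: "\<forall>y\<in>{-1..1}. e2E \<alpha> s \<mu> D y = 0"
  shows "\<forall>y\<in>{-1..1}. e2E \<alpha> s (\<mu>+1) (Tseq s \<mu> D) y = 0"
proof
  fix y :: real assume y: "y \<in> {-1..1}"
  have g: "complex_of_real (1 + s*y) \<noteq> 0" using gpos[OF s y] by (metis of_real_eq_0_iff order_less_irrefl)
  have ac: "complex_of_real \<alpha> = 1 - (complex_of_real s)^2" using a by simp
  have gc: "complex_of_real (1 + s*y) = 1 + complex_of_real s * complex_of_real y" by simp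
  note dd = e2E_deriv[OF s y D, of \<alpha> \<mu>]
  have T0: "(2 * of_real \<alpha>*\<mu> * of_real s/(of_real (1 + s*y))^2) * D 0 y + (\<mu>^2 + \<mu> - 2 * of_real \<alpha>*\<mu>/of_real (1 + s*y)) * D (Suc 0) y
       + ((2*\<mu>+2 - 2 * of_real \<alpha>/of_real (1 + s*y)) + (2 * of_real \<alpha> * of_real s/(of_real (1 + s*y))^2) * of_real y) * D (Suc 0) y
       + (2*\<mu>+2 - 2 * of_real \<alpha>/of_real (1 + s*y)) * of_real y * D (Suc (Suc 0)) y + 2 * of_real y*D (Suc (Suc 0)) y
       + ((of_real y)^2 - 1) * D (Suc (Suc (Suc 0))) y = 0"
    by (rule zero_deriv[OF _ y _ dd]) (use E in auto)
  have E0: "e2E \<alpha> s \<mu> D y = 0" using E y by blast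
  note id = ladder_identity[OF gc g, of \<mu> "D 0 y" "D (Suc 0) y" "D (Suc (Suc 0)) y" "D (Suc (Suc (Suc 0))) y", folded ac]
  have "e2E \<alpha> s (\<mu>+1) (Tseq s \<mu> D) y
     = ((\<mu>+1)^2 + (\<mu>+1) - 2 * of_real \<alpha>*(\<mu>+1)/of_real (1 + s*y)) * (of_real s*\<mu>*D 0 y + of_real (1 + s*y)*D (Suc 0) y)
       + (2*(\<mu>+1) + 2 - 2 * of_real \<alpha>/of_real (1 + s*y)) * of_real y * (of_real s*(\<mu>+1)*D (Suc 0) y + of_real (1 + s*y)*D (Suc (Suc 0)) y)
       + ((of_real y)^2 - 1) * (of_real s*(\<mu>+2)*D (Suc (Suc 0)) y + of_real (1 + s*y)*D (Suc (Suc (Suc 0))) y)"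
    unfolding e2E_alt Tseq_def by (simp add: add.commute)
  also have "\<dots> = 0"
    unfolding id using T0 E0 unfolding e2E_alt by simp
  finally show "e2E \<alpha> s (\<mu>+1) (Tseq s \<mu> D) y = 0" .
qed


lemma kill:
  fixes \<alpha> s :: real and \<mu> :: complex
  assumes a: "\<alpha> = 1 - s^2" "0 < \<alpha>" and s: "0 \<le> s" "s < 1"
    and D: "\<forall>n. \<forall>x\<in>{-1..1}. (D n has_vector_derivative D (Suc n) x) (at x within {-1..1})"
    and E: "\<forall>y\<in>{-1..1}. e2E \<alpha> s \<mu> D y = 0"
    and T: "\<forall>y\<in>{-1..1}. Tseq s \<mu> D 0 y = 0"
    and mu: "\<mu> \<noteq> 0" "\<mu> \<noteq> 1"
  shows "\<forall>y\<in>{-1..1}. D 0 y = 0"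
proof
  fix y :: real assume y: "y \<in> {-1..1}"
  have gn: "complex_of_real (1 + s*x) \<noteq> 0" if "x \<in> {-1..1}" for x
    using gpos[OF s that] by (metis of_real_eq_0_iff order_less_irrefl)
  have ac: "complex_of_real \<alpha> = 1 - (complex_of_real s)^2" using a by simp
  have gc: "complex_of_real (1 + s*y) = 1 + complex_of_real s * complex_of_real y" by simp
  have D1: "D (Suc 0) x = - of_real s * \<mu> * D 0 x / of_real (1 + s*x)" if "x \<in> {-1..1}" for x
  proof -
    have "of_real s * \<mu> * D 0 x + of_real (1 + s*x) * D (Suc 0) x = 0"
      using T that unfolding Tseq_def by simp
    then show ?thesis using gn[OF that] by (simp add: field_simps) (metis add.commute add.left_commute add_eq_0_iff2)
  qed
  define c where "c = - of_real s * \<mu>"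
  define h where "h x = c * D 0 x * of_real (1 / (1 + s*x))" for x
  have hD1: "h x = D (Suc 0) x" if "x \<in> {-1..1}" for x
    unfolding h_def c_def D1[OF that] by (simp add: divide_inverse)
  have "((\<lambda>x. 1 / (1 + s * x)) has_real_derivative (- s / (1 + s * y)^2)) (at y within {-1..1})"
    using gpos[OF s y] by (auto intro!: derivative_eq_intros simp: field_simps power2_eq_square)
  then have "(h has_vector_derivative c * D 0 y * of_real (- s / (1 + s * y)^2) + c * D (Suc 0) y * of_real (1 / (1 + s*y)))
     (at y within {-1..1})"
    unfolding h_def
    by (intro has_vector_derivative_mult has_vector_derivative_mult_right has_vector_derivative_of_real
        D[rule_format, OF y]) 
  moreover have "(h has_vector_derivative D (Suc (Suc 0)) y) (at y within {-1..1})"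
    by (rule has_vector_derivative_transform_within[OF D[rule_format, OF y, of "Suc 0"], of 1])
       (use y hD1 in auto)
  ultimately have D2: "D (Suc (Suc 0)) y = c * D 0 y * of_real (- s / (1 + s * y)^2) + c * D (Suc 0) y * of_real (1 / (1 + s*y))"
    using vector_derivative_unique_within_closed_interval[of "-1" 1 y h] y by auto
  have D2': "D (Suc (Suc 0)) y = (of_real s)^2 * \<mu> * (\<mu>+1) * D 0 y / (of_real (1 + s*y))^2"
    unfolding D2 D1[OF y] c_def using gn[OF y] by (simp add: field_simps power2_eq_square) (simp add: add_divide_distrib)
  have "0 = e2E \<alpha> s \<mu> D y" using E y by simp
  also have "\<dots> = complex_of_real \<alpha> * \<mu> * (\<mu>-1) / (of_real (1 + s*y))^2 * D 0 y"
    unfolding e2E_alt D2' D1[OF y]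
    using kill_identity[OF gc gn[OF y], of \<mu> "D 0 y", folded ac] by simp
  finally have "complex_of_real \<alpha> * \<mu> * (\<mu>-1) / (of_real (1 + s*y))^2 * D 0 y = 0" by simp
  moreover have "complex_of_real \<alpha> * \<mu> * (\<mu>-1) / (of_real (1 + s*y))^2 \<noteq> 0"
    using a(2) mu gn[OF y] by simp
  ultimately show "D 0 y = 0" by simp
qed


lemma factor3:
  fixes X E a K b c d :: complex
  shows "X * (E * a) + K * (E * b) - c * (E * d) = E * (X * a + K * b - c * d)"
  by (simp add: algebra_simps)

lemma transform:
  fixes \<alpha> s :: real and \<mu> :: complex
  assumes a: "\<alpha> = 1 - s^2" "0 < \<alpha>" and s: "0 \<le> s" "s < 1"
    and D: "\<forall>n. \<forall>x\<in>{-1..1}. (D n has_vector_derivative D (Suc n) x) (at x within {-1..1})"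
    and E: "\<forall>y\<in>{-1..1}. e2E \<alpha> s \<mu> D y = 0"
    and mu: "1 + s < Re \<mu>"
  shows "\<forall>y\<in>{-1..1}. D 0 y = 0"
proof -
  define G where "G z = 1 + s - 2 * s * z" for z :: real
  define m where "m z = (2 * z - 1 - s) / G z" for z
  define Ef where "Ef z = rp (G z) (-\<mu>)" for z
  define F0 where "F0 z = Ef z * D 0 (m z)" for z
  define F1 where "F1 z = Ef z * (of_real (2 * s/G z) * \<mu> * D 0 (m z) + of_real (2*\<alpha>/(G z)^2) * D (Suc 0) (m z))" for z
  define F2 where "F2 z = Ef z * (of_real (4 * s^2/(G z)^2) * \<mu> * (\<mu>+1) * D 0 (m z)
      + of_real (8 * s*\<alpha>/(G z)^3) * (\<mu>+1) * D (Suc 0) (m z) + of_real (4*\<alpha>^2/(G z)^4) * D (Suc (Suc 0)) (m z))" for z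
  have Gpos: "0 < G z" if "z \<le> 1" for z
  proof -
    have "s * z \<le> s * 1" using s that by (intro mult_left_mono) auto
    then show ?thesis unfolding G_def using s by linarith
  qed
  have Gnz: "G z \<noteq> 0" if "z \<le> 1" for z using Gpos[OF that] by simp
  have mp1: "m z + 1 = 2 * z * (1-s) / G z" if "z \<le> 1" for z
    using Gnz[OF that] unfolding m_def by (simp add: field_simps G_def)
  have mm1: "1 - m z = 2 * (1+s) * (1-z) / G z" if "z \<le> 1" for z
    using Gnz[OF that] unfolding m_def by (simp add: field_simps G_def)
  have mI: "m z \<in> {-1..1}" if "z \<in> {0..1}" for z
  proof -
    have "0 \<le> 2 * z * (1-s) / G z" using that s Gpos[of z] by auto
    moreover have "0 \<le> 2 * (1+s) * (1-z) / G z" using that s Gpos[of z] by auto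
    ultimately show ?thesis using mp1[of z] mm1[of z] that by auto
  qed
  have mO: "m z \<in> {-1<..<1}" if "z \<in> {0<..<1}" for z
  proof -
    have "0 < 2 * z * (1-s) / G z" using that s Gpos[of z] by auto
    moreover have "0 < 2 * (1+s) * (1-z) / G z" using that s Gpos[of z] by auto
    ultimately show ?thesis using mp1[of z] mm1[of z] that by auto
  qed
  have cD: "continuous_on {-1..1} (D k)" for k
    by (rule continuous_on_vector_derivative[of _ _ "D (Suc k)"]) (use D in auto)
  have cm: "continuous_on {0..1} m"
    unfolding m_def G_def by (intro continuous_intros) (use Gnz in \<open>auto simp: G_def\<close>)
  have cDm: "continuous_on {0..1} (\<lambda>z. D k (m z))" for k
    by (rule continuous_on_compose2[OF cD[of k] cm]) (use mI in auto)
  have cG: "continuous_on {0..1} G" unfolding G_def by (intro continuous_intros)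
  have cEf: "continuous_on {0..1} Ef"
    unfolding Ef_def rp_def
    by (intro continuous_on_powr_complex continuous_intros cG) (use Gpos in \<open>auto simp: less_imp_le\<close>, metis Gpos less_irrefl)
  have cF0: "continuous_on {0..1} F0"
    unfolding F0_def by (intro continuous_intros cEf cDm)
  have cF1: "continuous_on {0..1} F1"
    unfolding F1_def by (intro continuous_intros cEf cDm cG) (use Gnz in auto)
  have dm: "(m has_real_derivative 2*\<alpha>/(G z)^2) (at z)" if "z \<in> {0<..<1}" for z
  proof -
    have "((\<lambda>z. (2 * z - 1 - s) / (1 + s - 2 * s * z)) has_real_derivative
          ((2 * (1 + s - 2 * s * z) - (2 * z - 1 - s) * (- (2 * s))) / (1 + s - 2 * s * z)^2)) (at z)"
      using Gnz[of z] that unfolding G_def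
      by (auto intro!: derivative_eq_intros simp: power2_eq_square)
    moreover have "(2 * (1 + s - 2 * s * z) - (2 * z - 1 - s) * (- (2 * s))) = 2*\<alpha>"
      using a(1) by (simp add: algebra_simps power2_eq_square)
    ultimately show ?thesis unfolding m_def G_def by simp
  qed
  have dDm: "((\<lambda>z. D k (m z)) has_vector_derivative of_real (2*\<alpha>/(G z)^2) * D (Suc k) (m z)) (at z)"
    if z: "z \<in> {0<..<1}" for z k
  proof -
    have "(m has_vector_derivative 2*\<alpha>/(G z)^2) (at z)"
      using dm[OF z] by (simp add: has_real_derivative_iff_has_vector_derivative)
    moreover have "(D k has_vector_derivative D (Suc k) (m z)) (at (m z))"
    proof -
      have "m z \<in> {-1..1}" using mO[OF z] by auto
      then have "(D k has_vector_derivative D (Suc k) (m z)) (at (m z) within {-1..1})" using D by blast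
      then show ?thesis using at_interior01[OF mO[OF z]] by simp
    qed
    ultimately have "(D k \<circ> m has_vector_derivative (2*\<alpha>/(G z)^2) *\<^sub>R D (Suc k) (m z)) (at z)"
      by (rule vector_diff_chain_at)
    then show ?thesis by (simp add: o_def scaleR_conv_of_real)
  qed
  have dEf: "(Ef has_vector_derivative of_real (2 * s) * \<mu> * Ef z / of_real (G z)) (at z)"
    if z: "z \<in> {0<..<1}" for z
  proof -
    have "(G has_vector_derivative (- 2 * s)) (at z)"
      unfolding G_def by (auto intro!: derivative_eq_intros simp: has_real_derivative_iff_has_vector_derivative[symmetric])
    moreover have "((\<lambda>x. rp x (-\<mu>)) has_vector_derivative (-\<mu> * rp (G z) (-\<mu>) / of_real (G z))) (at (G z))"
      using rp_deriv[of "G z" "-\<mu>" UNIV] Gpos[of z] z by simp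
    ultimately have "((\<lambda>x. rp x (-\<mu>)) \<circ> G has_vector_derivative (- 2 * s) *\<^sub>R (-\<mu> * rp (G z) (-\<mu>) / of_real (G z))) (at z)"
      by (rule vector_diff_chain_at)
    then show ?thesis unfolding Ef_def by (simp add: o_def scaleR_conv_of_real mult.assoc)
  qed
  have dco1: "((\<lambda>z. complex_of_real (2 * s/G z)) has_vector_derivative of_real (4 * s^2/(G z)^2)) (at z)"
    if z: "z \<in> {0<..<1}" for z
  proof -
    have "((\<lambda>z. 2 * s/(1 + s - 2 * s * z)) has_real_derivative 4 * s^2/(1 + s - 2 * s * z)^2) (at z)"
      using Gnz[of z] z unfolding G_def
      by (auto intro!: derivative_eq_intros simp: power2_eq_square)
    then show ?thesis unfolding G_def by (rule has_vector_derivative_of_real)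
  qed
  have dco2: "((\<lambda>z. complex_of_real (2*\<alpha>/(G z)^2)) has_vector_derivative of_real (8 * s*\<alpha>/(G z)^3)) (at z)"
    if z: "z \<in> {0<..<1}" for z
  proof -
    have dG: "(G has_real_derivative (- 2 * s)) (at z)"
      unfolding G_def by (auto intro!: derivative_eq_intros)
    have "((\<lambda>z. 2 * \<alpha> / (G z)^2) has_real_derivative 8 * s * \<alpha> / (G z)^3) (at z)"
      using Gnz[of z] z
      by (auto intro!: derivative_eq_intros dG simp: field_simps power2_eq_square eval_nat_numeral)
    then show ?thesis by (rule has_vector_derivative_of_real)
  qed
  have d0: "(F0 has_vector_derivative F1 z) (at z)" if z: "z \<in> {0<..<1}" for z
  proof -
    have "(F0 has_vector_derivative (Ef z * (of_real (2*\<alpha>/(G z)^2) * D (Suc 0) (m z))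
         + of_real (2 * s) * \<mu> * Ef z / of_real (G z) * D 0 (m z))) (at z)"
      unfolding F0_def[abs_def]
      by (intro has_vector_derivative_mult dEf dDm z)
    moreover have "Ef z * (of_real (2*\<alpha>/(G z)^2) * D (Suc 0) (m z))
         + of_real (2 * s) * \<mu> * Ef z / of_real (G z) * D 0 (m z) = F1 z"
      unfolding F1_def by (simp add: algebra_simps)
    ultimately show ?thesis by simp
  qed
  have d1: "(F1 has_vector_derivative F2 z) (at z)" if z: "z \<in> {0<..<1}" for z
  proof -
    have "(F1 has_vector_derivative
        (Ef z * ((of_real (2 * s/G z) * \<mu> * (of_real (2*\<alpha>/(G z)^2) * D (Suc 0) (m z)) + of_real (4 * s^2/(G z)^2) * \<mu> * D 0 (m z))
          + (of_real (2*\<alpha>/(G z)^2) * (of_real (2*\<alpha>/(G z)^2) * D (Suc (Suc 0)) (m z)) + of_real (8 * s*\<alpha>/(G z)^3) * D (Suc 0) (m z)))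
        + of_real (2 * s) * \<mu> * Ef z / of_real (G z) * (of_real (2 * s/G z) * \<mu> * D 0 (m z) + of_real (2*\<alpha>/(G z)^2) * D (Suc 0) (m z))))
        (at z)"
      unfolding F1_def[abs_def]
      by (intro has_vector_derivative_mult has_vector_derivative_add has_vector_derivative_mult_left dEf dDm dco1 dco2 z)
    moreover have "Ef z * ((of_real (2 * s/G z) * \<mu> * (of_real (2*\<alpha>/(G z)^2) * D (Suc 0) (m z)) + of_real (4 * s^2/(G z)^2) * \<mu> * D 0 (m z))
          + (of_real (2*\<alpha>/(G z)^2) * (of_real (2*\<alpha>/(G z)^2) * D (Suc (Suc 0)) (m z)) + of_real (8 * s*\<alpha>/(G z)^3) * D (Suc 0) (m z)))
        + of_real (2 * s) * \<mu> * Ef z / of_real (G z) * (of_real (2 * s/G z) * \<mu> * D 0 (m z) + of_real (2*\<alpha>/(G z)^2) * D (Suc 0) (m z))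
        = F2 z"
      unfolding F2_def using Gnz[of z] z
      by (simp add: field_simps power2_eq_square eval_nat_numeral)
    ultimately show ?thesis by simp
  qed
  have eqn: "of_real (z * (1 - z)) * F2 z + ((\<mu> - of_real s) - ((\<mu> - 1) + \<mu> + 1) * of_real z) * F1 z
      - (\<mu> - 1) * \<mu> * F0 z = 0" if z: "z \<in> {0<..<1}" for z
  proof -
    define Gc where "Gc = complex_of_real (G z)"
    define S where "S = complex_of_real s"
    define Z where "Z = complex_of_real z"
    define A where "A = complex_of_real \<alpha>"
    define d0 where "d0 = D 0 (m z)"
    define d1 where "d1 = D (Suc 0) (m z)"
    define d2 where "d2 = D (Suc (Suc 0)) (m z)"
    have hG: "Gc = 1 + S - 2 * S * Z" unfolding Gc_def S_def Z_def G_def by simp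
    have hGnz: "Gc \<noteq> 0" unfolding Gc_def using Gnz[of z] z by simp
    have hA: "A = 1 - S^2" unfolding A_def S_def a(1) by simp
    have hAnz: "A \<noteq> 0" unfolding A_def using a(2) by simp
    note id = transform_identity[OF hG hGnz hA hAnz, of \<mu> d0 d1 d2]
    have M: "(2 * Z - 1 - S) / Gc = complex_of_real (m z)"
      unfolding Gc_def S_def Z_def m_def by simp
    have e: "e2E \<alpha> s \<mu> D (m z) = 0" using E mI[of z] z by auto
    have rhs0: "(\<mu>^2 + \<mu> - 2 * A * \<mu> / (1 + S * ((2 * Z - 1 - S) / Gc))) * d0
        + (2 * \<mu> + 2 - 2 * A / (1 + S * ((2 * Z - 1 - S) / Gc))) * ((2 * Z - 1 - S) / Gc) * d1
        + (((2 * Z - 1 - S) / Gc)^2 - 1) * d2 = 0"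
      using e unfolding M unfolding e2E_alt A_def S_def d0_def d1_def d2_def by simp
    have f1: "F1 z = Ef z * (2 * S / Gc * \<mu> * d0 + 2 * A / Gc^2 * d1)"
      unfolding F1_def Gc_def S_def A_def d0_def d1_def by simp
    have f2: "F2 z = Ef z * (4 * S^2 / Gc^2 * \<mu> * (\<mu> + 1) * d0 + 8 * S * A / Gc^3 * (\<mu> + 1) * d1 + 4 * A^2 / Gc^4 * d2)"
      unfolding F2_def Gc_def S_def A_def d0_def d1_def d2_def by simp
    have f0: "F0 z = Ef z * d0" unfolding F0_def d0_def ..
    have "of_real (z * (1 - z)) * F2 z + ((\<mu> - of_real s) - ((\<mu> - 1) + \<mu> + 1) * of_real z) * F1 z
      - (\<mu> - 1) * \<mu> * F0 z
      = Ef z * (Z * (1 - Z) * (4 * S^2 / Gc^2 * \<mu> * (\<mu> + 1) * d0 + 8 * S * A / Gc^3 * (\<mu> + 1) * d1 + 4 * A^2 / Gc^4 * d2)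
       + ((\<mu> - S) - ((\<mu> - 1) + \<mu> + 1) * Z) * (2 * S / Gc * \<mu> * d0 + 2 * A / Gc^2 * d1)
       - (\<mu> - 1) * \<mu> * d0)"
    proof -
      have zz: "complex_of_real (z * (1 - z)) = Z * (1 - Z)" unfolding Z_def by simp
      have kk: "(\<mu> - complex_of_real s) - ((\<mu> - 1) + \<mu> + 1) * complex_of_real z = (\<mu> - S) - ((\<mu> - 1) + \<mu> + 1) * Z"
        unfolding Z_def S_def ..
      show ?thesis unfolding f0 f1 f2 zz kk by (rule factor3)
    qed
    also have "\<dots> = 0" unfolding id rhs0 by simp
    finally show ?thesis .
  qed
  have F00: "\<forall>z\<in>{0..1}. F0 z = 0"
  proof (rule core[of "\<mu> - of_real s" "\<mu> - 1" \<mu> F0 F1 F2])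
    show "1 < Re (\<mu> - complex_of_real s)" using mu s by simp
    show "1 < Re (\<mu> - 1 + \<mu> + 1 - (\<mu> - complex_of_real s))" using mu s by simp
    show "(of_nat k + (\<mu> - 1)) * (of_nat k + \<mu>) \<noteq> 0" for k
    proof -
      have "Re (of_nat k + (\<mu> - 1)) > 0" "Re (of_nat k + \<mu>) > 0" using mu s by auto
      from re_pos_nz[OF this(1)] re_pos_nz[OF this(2)] show ?thesis by simp
    qed
  qed (use cF0 cF1 d0 d1 eqn in auto)
  show ?thesis
  proof
    fix y :: real assume y: "y \<in> {-1..1}"
    have gy: "0 < 1 + s * y" using gpos[OF s y] .
    define z where "z = (1 + s) * (1 + y) / (2 * (1 + s * y))"
    have z0: "0 \<le> z" unfolding z_def using gy s y by auto
    have z1: "z \<le> 1"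
    proof -
      have "(1 + s) * (1 + y) \<le> 2 * (1 + s * y)"
      proof -
        have "0 \<le> (1 - y) * (1 - s)" using s y by auto
        then show ?thesis by (simp add: algebra_simps)
      qed
      then show ?thesis unfolding z_def using gy by (simp add: field_simps)
    qed
    have Gz: "G z = \<alpha> / (1 + s * y)"
      unfolding G_def z_def a(1) using gy by (simp add: field_simps power2_eq_square)
    have mz: "m z = y"
    proof -
      have "2 * z - 1 - s = \<alpha> * y / (1 + s * y)"
        unfolding z_def a(1) using gy by (simp add: field_simps power2_eq_square)
      then show ?thesis unfolding m_def Gz using gy a(2) by (simp add: field_simps)
    qed
    have "F0 z = 0" using F00 z0 z1 by auto
    moreover have "Ef z \<noteq> 0" unfolding Ef_def using Gpos[OF z1] by (simp add: rp_nz)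
    ultimately show "D 0 y = 0" unfolding F0_def mz by simp
  qed
qed


theorem proposition3p3:
  fixes \<alpha> :: real
  assumes "0 < \<alpha>" and "\<alpha> \<le> 1"
  shows "(\<forall>l::complex. Re l > -1 \<and> l \<noteq> 0 \<and> l \<noteq> 1 \<longrightarrow>
           \<not> (\<exists>\<psi>. C_inf_on {0..1} \<psi> \<and> (\<exists>z\<in>{0..1}. \<psi> z \<noteq> 0) \<and>
                 (\<forall>z\<in>{0..1}.
                    of_real (z * (1 - z)) * dwithin {0..1} (dwithin {0..1} \<psi>) z
                  + (l - of_real (sqrt (1 - \<alpha>)) - 2 * l * of_real z) * dwithin {0..1} \<psi> z
                  - l * (l - 1) * \<psi> z = 0)))
       \<and> (\<forall>l::complex.
           (\<exists>\<phi>. C_inf_on {-1..1} \<phi> \<and> (\<exists>y\<in>{-1..1}. \<phi> y \<noteq> 0) \<and>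
              (\<forall>y\<in>{-1..1}.
                 (l\<^sup>2 + l - 2 * of_real \<alpha> * l / of_real (1 + sqrt (1 - \<alpha>) * y)) * \<phi> y
               + (2 * l + 2 - 2 * of_real \<alpha> / of_real (1 + sqrt (1 - \<alpha>) * y))
                   * of_real y * dwithin {-1..1} \<phi> y
               + of_real (y\<^sup>2 - 1) * dwithin {-1..1} (dwithin {-1..1} \<phi>) y = 0))
           \<longrightarrow> Re l < 0 \<or> l \<in> {0, 1})"
proof -
  note al = assms
  define s where "s = sqrt (1 - \<alpha>)"
  have s0: "0 \<le> s" unfolding s_def using al by simp
  have s1: "s < 1" unfolding s_def using al by simp
  have a: "\<alpha> = 1 - s^2" unfolding s_def using al by simp
  show ?thesis
  proof (intro conjI allI impI notI)
    fix l :: complex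
    assume l: "Re l > -1 \<and> l \<noteq> 0 \<and> l \<noteq> 1"
    assume "\<exists>\<psi>. C_inf_on {0..1} \<psi> \<and> (\<exists>z\<in>{0..1}. \<psi> z \<noteq> 0) \<and>
                 (\<forall>z\<in>{0..1}.
                    of_real (z * (1 - z)) * dwithin {0..1} (dwithin {0..1} \<psi>) z
                  + (l - of_real (sqrt (1 - \<alpha>)) - 2 * l * of_real z) * dwithin {0..1} \<psi> z
                  - l * (l - 1) * \<psi> z = 0)"
    then obtain \<psi> where C: "C_inf_on {0..1} \<psi>" and nz: "\<exists>z\<in>{0..1}. \<psi> z \<noteq> 0"
      and eq: "\<forall>z\<in>{0..1}.
                    of_real (z * (1 - z)) * dwithin {0..1} (dwithin {0..1} \<psi>) z
                  + (l - of_real (sqrt (1 - \<alpha>)) - 2 * l * of_real z) * dwithin {0..1} \<psi> z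
                  - l * (l - 1) * \<psi> z = 0" by blast
    have "\<forall>z\<in>{0..1}. \<psi> z = 0"
      by (rule part1[OF s0[unfolded s_def] s1[unfolded s_def] _ _ _ C eq]) (use l in auto)
    then show False using nz by blast
  next
    fix l :: complex
    assume "\<exists>\<phi>. C_inf_on {-1..1} \<phi> \<and> (\<exists>y\<in>{-1..1}. \<phi> y \<noteq> 0) \<and>
              (\<forall>y\<in>{-1..1}.
                 (l\<^sup>2 + l - 2 * of_real \<alpha> * l / of_real (1 + sqrt (1 - \<alpha>) * y)) * \<phi> y
               + (2 * l + 2 - 2 * of_real \<alpha> / of_real (1 + sqrt (1 - \<alpha>) * y))
                   * of_real y * dwithin {-1..1} \<phi> y
               + of_real (y\<^sup>2 - 1) * dwithin {-1..1} (dwithin {-1..1} \<phi>) y = 0)"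
    then obtain \<phi> where C: "C_inf_on {-1..1} \<phi>" and nz: "\<exists>y\<in>{-1..1}. \<phi> y \<noteq> 0"
      and eq: "\<forall>y\<in>{-1..1}.
                 (l\<^sup>2 + l - 2 * of_real \<alpha> * l / of_real (1 + s * y)) * \<phi> y
               + (2 * l + 2 - 2 * of_real \<alpha> / of_real (1 + s * y))
                   * of_real y * dwithin {-1..1} \<phi> y
               + of_real (y\<^sup>2 - 1) * dwithin {-1..1} (dwithin {-1..1} \<phi>) y = 0"
      unfolding s_def by blast
    show "Re l < 0 \<or> l \<in> {0, 1}"
    proof (rule ccontr)
      assume "\<not> (Re l < 0 \<or> l \<in> {0, 1})"
      then have l: "0 \<le> Re l" "l \<noteq> 0" "l \<noteq> 1" by auto
      from C obtain D where D0: "D 0 = \<phi>"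
        and D: "\<forall>n. \<forall>x\<in>{-1..1}. (D n has_vector_derivative D (Suc n) x) (at x within {-1..1})"
        unfolding C_inf_on_def by blast
      have E: "\<forall>y\<in>{-1..1}. e2E \<alpha> s l D y = 0"
      proof
        fix y :: real assume y: "y \<in> {-1..1}"
        have "(-1::real) < 1" by simp
        note dd = dwithin_D[OF this D y]
        show "e2E \<alpha> s l D y = 0"
          using eq[rule_format, OF y] unfolding e2E_def dd[unfolded D0] D0 .
      qed
      define D1 where "D1 = Tseq s l D"
      define D2 where "D2 = Tseq s (l+1) D1"
      have dD1: "\<forall>n. \<forall>x\<in>{-1..1}. (D1 n has_vector_derivative D1 (Suc n) x) (at x within {-1..1})"
        unfolding D1_def by (rule T_deriv[OF D])
      have dD2: "\<forall>n. \<forall>x\<in>{-1..1}. (D2 n has_vector_derivative D2 (Suc n) x) (at x within {-1..1})"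
        unfolding D2_def by (rule T_deriv[OF dD1])
      have E1: "\<forall>y\<in>{-1..1}. e2E \<alpha> s (l+1) D1 y = 0"
        unfolding D1_def by (rule T_ladder[OF a s0 s1 D E])
      have E2: "\<forall>y\<in>{-1..1}. e2E \<alpha> s (l+1+1) D2 y = 0"
        unfolding D2_def by (rule T_ladder[OF a s0 s1 dD1 E1])
      have Z2: "\<forall>y\<in>{-1..1}. D2 0 y = 0"
        by (rule transform[OF a al(1) s0 s1 dD2 E2]) (use l s1 in simp)
      have Z1: "\<forall>y\<in>{-1..1}. D1 0 y = 0"
      proof (rule kill[OF a al(1) s0 s1 dD1 E1])
        show "\<forall>y\<in>{-1..1}. Tseq s (l + 1) D1 0 y = 0" using Z2 unfolding D2_def .
        show "l + 1 \<noteq> 0" using l(1) re_pos_nz[of "l+1"] by simp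
        show "l + 1 \<noteq> 1" using l(2) by simp
      qed
      have Z0: "\<forall>y\<in>{-1..1}. D 0 y = 0"
      proof (rule kill[OF a al(1) s0 s1 D E])
        show "\<forall>y\<in>{-1..1}. Tseq s l D 0 y = 0" using Z1 unfolding D1_def .
      qed (use l in auto)
      then show False using nz D0 by auto
    qed
  qed
qed

end
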